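(* Let $R$ be an arbitrary (not necessarily unital) associative ring. Then the full subcategory of s-unital left $R$-modules is closed under submodules, quotient modules, extensions, and all colimits (including direct sums and direct limits) in the abelian category of all (nonunital) left $R$-modules. In other words, it is a hereditary torsion class in that category.
   Context: Modules over a nonunital ring $R$ are not assumed unital; the category of all left $R$-modules is abelian. A left $R$-module $M$ is called s-unital if for every $m\in M$ there exists $e\in R$ (not necessarily idempotent) with $em=m$. *)

theory Defs
  imports Main
begin

text \<open>The ring is
  the type 'r of class ring (HOL's class ring has no unit).\<close>

record ('r, 'm) nmod =
  mcarrier :: "'m set"
  mplus    :: "'m \<Rightarrow> 'm \<Rightarrow> 'm"
  mzero    :: "'m"
  msmult   :: "'r \<Rightarrow> 'm \<Rightarrow> 'm"

definition nmodule :: "('r::ring, 'm, 'z) nmod_scheme \<Rightarrow> bool" where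
  "nmodule M \<longleftrightarrow>
     mzero M \<in> mcarrier M \<and>
     (\<forall>x\<in>mcarrier M. \<forall>y\<in>mcarrier M. mplus M x y \<in> mcarrier M) \<and>
     (\<forall>x\<in>mcarrier M. \<forall>y\<in>mcarrier M. \<forall>z\<in>mcarrier M.
        mplus M (mplus M x y) z = mplus M x (mplus M y z)) \<and>
     (\<forall>x\<in>mcarrier M. \<forall>y\<in>mcarrier M. mplus M x y = mplus M y x) \<and>
     (\<forall>x\<in>mcarrier M. mplus M (mzero M) x = x) \<and>
     (\<forall>x\<in>mcarrier M. \<exists>y\<in>mcarrier M. mplus M x y = mzero M) \<and>
     (\<forall>r. \<forall>x\<in>mcarrier M. msmult M r x \<in> mcarrier M) \<and>
     (\<forall>r. \<forall>x\<in>mcarrier M. \<forall>y\<in>mcarrier M.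
        msmult M r (mplus M x y) = mplus M (msmult M r x) (msmult M r y)) \<and>
     (\<forall>r s. \<forall>x\<in>mcarrier M. msmult M (r + s) x = mplus M (msmult M r x) (msmult M s x)) \<and>
     (\<forall>r s. \<forall>x\<in>mcarrier M. msmult M (r * s) x = msmult M r (msmult M s x))"

definition nhom :: "('r::ring, 'm, 'z) nmod_scheme \<Rightarrow> ('r, 'n, 'w) nmod_scheme \<Rightarrow> ('m \<Rightarrow> 'n) \<Rightarrow> bool" where
  "nhom M N f \<longleftrightarrow>
     (\<forall>x\<in>mcarrier M. f x \<in> mcarrier N) \<and>
     (\<forall>x\<in>mcarrier M. \<forall>y\<in>mcarrier M. f (mplus M x y) = mplus N (f x) (f y)) \<and>
     (\<forall>r. \<forall>x\<in>mcarrier M. f (msmult M r x) = msmult N r (f x))"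

definition submodule :: "('r::ring, 'm, 'z) nmod_scheme \<Rightarrow> 'm set \<Rightarrow> bool" where
  "submodule M S \<longleftrightarrow>
     S \<subseteq> mcarrier M \<and> mzero M \<in> S \<and>
     (\<forall>x\<in>S. \<forall>y\<in>S. mplus M x y \<in> S) \<and>
     (\<forall>x\<in>S. \<exists>y\<in>S. mplus M x y = mzero M) \<and>
     (\<forall>r. \<forall>x\<in>S. msmult M r x \<in> S)"

definition s_unital :: "('r::ring, 'm, 'z) nmod_scheme \<Rightarrow> bool" where
  "s_unital M \<longleftrightarrow> (\<forall>m\<in>mcarrier M. \<exists>e. msmult M e m = m)"

text \<open>Small diagrams of modules: a graph with vertex set I, edge set E, source and
  target maps, modules N i and homomorphisms phi e : N (src e) \<rightarrow> N (tgt e).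
  (Colimits over a small category are the colimits over its underlying graph.)\<close>
definition ndiagram :: "'i set \<Rightarrow> 'e set \<Rightarrow> ('e \<Rightarrow> 'i) \<Rightarrow> ('e \<Rightarrow> 'i)
    \<Rightarrow> ('i \<Rightarrow> ('r::ring, 'n) nmod) \<Rightarrow> ('e \<Rightarrow> 'n \<Rightarrow> 'n) \<Rightarrow> bool" where
  "ndiagram I E src tgt N phi \<longleftrightarrow>
     (\<forall>i\<in>I. nmodule (N i)) \<and>
     (\<forall>e\<in>E. src e \<in> I \<and> tgt e \<in> I \<and> nhom (N (src e)) (N (tgt e)) (phi e))"

definition ncocone :: "'i set \<Rightarrow> 'e set \<Rightarrow> ('e \<Rightarrow> 'i) \<Rightarrow> ('e \<Rightarrow> 'i)
    \<Rightarrow> ('i \<Rightarrow> ('r::ring, 'n) nmod) \<Rightarrow> ('e \<Rightarrow> 'n \<Rightarrow> 'n)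
    \<Rightarrow> ('r, 'x) nmod \<Rightarrow> ('i \<Rightarrow> 'n \<Rightarrow> 'x) \<Rightarrow> bool" where
  "ncocone I E src tgt N phi X h \<longleftrightarrow>
     nmodule X \<and> (\<forall>i\<in>I. nhom (N i) X (h i)) \<and>
     (\<forall>e\<in>E. \<forall>x\<in>mcarrier (N (src e)). h (tgt e) (phi e x) = h (src e) x)"

text \<open>The universal property is
  required for target modules whose ambient type is 'm set (rich enough to hold
  e.g. quotients of M); every genuine colimit satisfies it.\<close>
definition ncolimit :: "'i set \<Rightarrow> 'e set \<Rightarrow> ('e \<Rightarrow> 'i) \<Rightarrow> ('e \<Rightarrow> 'i)
    \<Rightarrow> ('i \<Rightarrow> ('r::ring, 'n) nmod) \<Rightarrow> ('e \<Rightarrow> 'n \<Rightarrow> 'n)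
    \<Rightarrow> ('r, 'm) nmod \<Rightarrow> ('i \<Rightarrow> 'n \<Rightarrow> 'm) \<Rightarrow> bool" where
  "ncolimit I E src tgt N phi M g \<longleftrightarrow>
     ndiagram I E src tgt N phi \<and> ncocone I E src tgt N phi M g \<and>
     (\<forall>(X :: ('r, 'm set) nmod) h. ncocone I E src tgt N phi X h \<longrightarrow>
        (\<exists>u. nhom M X u \<and> (\<forall>i\<in>I. \<forall>x\<in>mcarrier (N i). u (g i x) = h i x) \<and>
             (\<forall>v. nhom M X v \<and> (\<forall>i\<in>I. \<forall>x\<in>mcarrier (N i). v (g i x) = h i x)
                  \<longrightarrow> (\<forall>y\<in>mcarrier M. v y = u y))))"

end

theory Submission
  imports Defs
begin

locale nm = fixes M :: "('r::ring, 'm, 'z) nmod_scheme" assumes nmod: "nmodule M"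
begin

lemma zero_in[simp]: "mzero M \<in> mcarrier M" using nmod unfolding nmodule_def by blast
lemma add_in[simp]: "x \<in> mcarrier M \<Longrightarrow> y \<in> mcarrier M \<Longrightarrow> mplus M x y \<in> mcarrier M"
  using nmod unfolding nmodule_def by blast
lemma sm_in[simp]: "x \<in> mcarrier M \<Longrightarrow> msmult M r x \<in> mcarrier M"
  using nmod unfolding nmodule_def by blast
lemma assoc: "x \<in> mcarrier M \<Longrightarrow> y \<in> mcarrier M \<Longrightarrow> z \<in> mcarrier M \<Longrightarrow>
   mplus M (mplus M x y) z = mplus M x (mplus M y z)"
  using nmod unfolding nmodule_def by blast
lemma comm: "x \<in> mcarrier M \<Longrightarrow> y \<in> mcarrier M \<Longrightarrow> mplus M x y = mplus M y x"
  using nmod unfolding nmodule_def by blast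
lemma lzero[simp]: "x \<in> mcarrier M \<Longrightarrow> mplus M (mzero M) x = x"
  using nmod unfolding nmodule_def by blast
lemma rzero[simp]: "x \<in> mcarrier M \<Longrightarrow> mplus M x (mzero M) = x"
  using comm lzero zero_in by metis
lemma inv: "x \<in> mcarrier M \<Longrightarrow> \<exists>y\<in>mcarrier M. mplus M x y = mzero M"
  using nmod unfolding nmodule_def by blast
lemma sm_add: "x \<in> mcarrier M \<Longrightarrow> y \<in> mcarrier M \<Longrightarrow>
   msmult M r (mplus M x y) = mplus M (msmult M r x) (msmult M r y)"
  using nmod unfolding nmodule_def by blast
lemma add_sm: "x \<in> mcarrier M \<Longrightarrow> msmult M (r + s) x = mplus M (msmult M r x) (msmult M s x)"
  using nmod unfolding nmodule_def by blast
lemma mult_sm: "x \<in> mcarrier M \<Longrightarrow> msmult M (r * s) x = msmult M r (msmult M s x)"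
  using nmod unfolding nmodule_def by blast
lemma lcomm: "x \<in> mcarrier M \<Longrightarrow> y \<in> mcarrier M \<Longrightarrow> z \<in> mcarrier M \<Longrightarrow>
   mplus M x (mplus M y z) = mplus M y (mplus M x z)"
  by (metis assoc comm)

lemma cancel: assumes "x \<in> mcarrier M" "y \<in> mcarrier M" "z \<in> mcarrier M"
  "mplus M x y = mplus M x z" shows "y = z"
proof -
  obtain w where w: "w \<in> mcarrier M" "mplus M x w = mzero M" using inv assms(1) by blast
  have "mplus M w (mplus M x y) = mplus M w (mplus M x z)" using assms(4) by simp
  then show ?thesis using w assms by (metis assoc comm lzero)
qed

lemma idem_zero: assumes "x \<in> mcarrier M" "mplus M x x = x" shows "x = mzero M"
  using cancel[of x x "mzero M"] assms by simp

lemma sm0[simp]: assumes "x \<in> mcarrier M" shows "msmult M 0 x = mzero M"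
  using idem_zero[of "msmult M 0 x"] add_sm[OF assms, of 0 0] assms by simp

lemma smz[simp]: "msmult M r (mzero M) = mzero M"
  using idem_zero[of "msmult M r (mzero M)"] sm_add[of "mzero M" "mzero M" r] by simp

lemma sm_neg: "x \<in> mcarrier M \<Longrightarrow> mplus M (msmult M r x) (msmult M (- r) x) = mzero M"
  by (metis add_sm sm0 right_minus)

lemma unit_combine:
  assumes y: "y \<in> mcarrier M"
    and h: "msmult M e' (mplus M y (msmult M (- e) y)) = mplus M y (msmult M (- e) y)"
  shows "msmult M (e + e' + - (e' * e)) y = y"
proof -
  have "msmult M e' (mplus M y (msmult M (- e) y))
      = mplus M (msmult M e' y) (msmult M (- (e' * e)) y)"
    using y by (simp add: sm_add mult_sm[symmetric])
  hence cd: "mplus M (msmult M e' y) (msmult M (- (e' * e)) y) = mplus M y (msmult M (- e) y)"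
    using h by simp
  have "msmult M (e + e' + - (e' * e)) y
     = mplus M (mplus M (msmult M e y) (msmult M e' y)) (msmult M (- (e' * e)) y)"
    using y by (simp only: add_sm)
  also have "\<dots> = mplus M (msmult M e y) (mplus M y (msmult M (- e) y))"
    using y cd by (simp add: assoc)
  also have "\<dots> = mplus M y (mplus M (msmult M e y) (msmult M (- e) y))"
    using y by (simp add: lcomm)
  also have "\<dots> = y" using y by (simp add: sm_neg)
  finally show ?thesis .
qed

lemma fix_combine:
  assumes z: "z \<in> mcarrier M" and ez: "msmult M e z = z"
  shows "msmult M (e + e' + - (e' * e)) z = z"
proof -
  have "msmult M e' z = msmult M (e' * e) z" using z ez by (simp add: mult_sm)
  moreover have "msmult M (e + e' + - (e' * e)) z
     = mplus M (mplus M (msmult M e z) (msmult M e' z)) (msmult M (- (e' * e)) z)"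
    using z by (simp only: add_sm)
  ultimately have "msmult M (e + e' + - (e' * e)) z
     = mplus M (mplus M z (msmult M (e' * e) z)) (msmult M (- (e' * e)) z)"
    using ez by simp
  also have "\<dots> = z" using z by (simp add: assoc sm_neg)
  finally show ?thesis .
qed

end


locale nmq = nm M for M :: "('r::ring, 'm) nmod" +
  fixes T :: "'m set"
  assumes T_sub: "T \<subseteq> mcarrier M" and T_zero: "mzero M \<in> T"
    and T_add: "\<And>x y. x \<in> T \<Longrightarrow> y \<in> T \<Longrightarrow> mplus M x y \<in> T"
    and T_inv: "\<And>x. x \<in> T \<Longrightarrow> \<exists>y\<in>T. mplus M x y = mzero M"
    and T_sm: "\<And>r x. x \<in> T \<Longrightarrow> msmult M r x \<in> T"
begin

definition cls :: "'m \<Rightarrow> 'm set" where "cls m = {mplus M m t | t. t \<in> T}"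

definition Q :: "('r, 'm set) nmod" where
  "Q = \<lparr>mcarrier = cls ` mcarrier M,
        mplus = (\<lambda>A B. {mplus M a b | a b. a \<in> A \<and> b \<in> B}),
        mzero = T,
        msmult = (\<lambda>r A. {mplus M (msmult M r a) t | a t. a \<in> A \<and> t \<in> T})\<rparr>"

lemma Tc: "x \<in> T \<Longrightarrow> x \<in> mcarrier M" using T_sub by blast

lemma cls_plus: assumes m: "m \<in> mcarrier M" and n: "n \<in> mcarrier M"
  shows "mplus Q (cls m) (cls n) = cls (mplus M m n)"
proof
  show "mplus Q (cls m) (cls n) \<subseteq> cls (mplus M m n)"
  proof
    fix x assume "x \<in> mplus Q (cls m) (cls n)"
    then obtain t t' where tt: "t \<in> T" "t' \<in> T" "x = mplus M (mplus M m t) (mplus M n t')"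
      unfolding Q_def cls_def by auto
    then have "x = mplus M (mplus M m n) (mplus M t t')"
      using m n Tc by (metis assoc lcomm add_in)
    then show "x \<in> cls (mplus M m n)" unfolding cls_def using tt T_add by blast
  qed
next
  show "cls (mplus M m n) \<subseteq> mplus Q (cls m) (cls n)"
  proof
    fix x assume "x \<in> cls (mplus M m n)"
    then obtain t where t: "t \<in> T" "x = mplus M (mplus M m n) t" unfolding cls_def by auto
    then have "x = mplus M (mplus M m t) (mplus M n (mzero M))"
      using m n Tc by (metis assoc comm add_in rzero)
    then show "x \<in> mplus Q (cls m) (cls n)" unfolding Q_def cls_def using t T_zero by auto
  qed
qed

lemma cls_sm: assumes m: "m \<in> mcarrier M"
  shows "msmult Q r (cls m) = cls (msmult M r m)"
proof
  show "msmult Q r (cls m) \<subseteq> cls (msmult M r m)"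
  proof
    fix x assume "x \<in> msmult Q r (cls m)"
    then obtain t t' where tt: "t \<in> T" "t' \<in> T" "x = mplus M (msmult M r (mplus M m t)) t'"
      unfolding Q_def cls_def by auto
    then have "x = mplus M (msmult M r m) (mplus M (msmult M r t) t')"
      using m Tc by (simp add: sm_add assoc)
    then show "x \<in> cls (msmult M r m)" unfolding cls_def using tt T_add T_sm by blast
  qed
next
  show "cls (msmult M r m) \<subseteq> msmult Q r (cls m)"
  proof
    fix x assume "x \<in> cls (msmult M r m)"
    then obtain t where t: "t \<in> T" "x = mplus M (msmult M r m) t" unfolding cls_def by auto
    then have "x = mplus M (msmult M r (mplus M m (mzero M))) t" using m by simp
    then show "x \<in> msmult Q r (cls m)" unfolding Q_def cls_def using t T_zero by auto
  qed
qed

lemma cls_T: assumes "m \<in> T" shows "cls m = T"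
proof
  show "cls m \<subseteq> T" unfolding cls_def using assms T_add by auto
  show "T \<subseteq> cls m"
  proof
    fix t assume t: "t \<in> T"
    obtain y where y: "y \<in> T" "mplus M m y = mzero M" using T_inv assms by blast
    have "t = mplus M m (mplus M y t)" using y t assms Tc by (metis assoc lzero)
    then show "t \<in> cls m" unfolding cls_def using y t T_add by blast
  qed
qed

lemma cls_eqT: assumes "m \<in> mcarrier M" "cls m = T" shows "m \<in> T"
proof -
  have "m \<in> cls m" unfolding cls_def using assms(1) T_zero by (metis (mono_tags, lifting) mem_Collect_eq rzero)
  then show ?thesis using assms by simp
qed

lemma Q_carrier: "mcarrier Q = cls ` mcarrier M" unfolding Q_def by simp
lemma Q_zero: "mzero Q = T" unfolding Q_def by simp

lemma Q_module: "nmodule Q"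
proof -
  have z: "mzero Q \<in> mcarrier Q" unfolding Q_carrier Q_zero using cls_T[OF T_zero] by force
  show ?thesis unfolding nmodule_def
  proof (intro conjI ballI allI)
    show "mzero Q \<in> mcarrier Q" by (rule z)
  next
    fix x y assume "x \<in> mcarrier Q" "y \<in> mcarrier Q"
    then show "mplus Q x y \<in> mcarrier Q" unfolding Q_carrier by (auto simp: cls_plus)
  next
    fix x y z assume "x \<in> mcarrier Q" "y \<in> mcarrier Q" "z \<in> mcarrier Q"
    then show "mplus Q (mplus Q x y) z = mplus Q x (mplus Q y z)"
      unfolding Q_carrier by (auto simp: cls_plus assoc)
  next
    fix x y assume "x \<in> mcarrier Q" "y \<in> mcarrier Q"
    then show "mplus Q x y = mplus Q y x" unfolding Q_carrier by (auto simp: cls_plus comm)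
  next
    fix x assume "x \<in> mcarrier Q"
    then obtain m where m: "m \<in> mcarrier M" "x = cls m" unfolding Q_carrier by auto
    then show "mplus Q (mzero Q) x = x" unfolding Q_zero
      using cls_T[OF T_zero] cls_plus[of "mzero M" m] by simp
  next
    fix x assume "x \<in> mcarrier Q"
    then obtain m where m: "m \<in> mcarrier M" "x = cls m" unfolding Q_carrier by auto
    obtain y where y: "y \<in> mcarrier M" "mplus M m y = mzero M" using inv m by blast
    have "mplus Q x (cls y) = mzero Q" using m y cls_plus cls_T[OF T_zero] Q_zero by simp
    then show "\<exists>y\<in>mcarrier Q. mplus Q x y = mzero Q" using y unfolding Q_carrier by blast
  next
    fix r x assume "x \<in> mcarrier Q"
    then show "msmult Q r x \<in> mcarrier Q" unfolding Q_carrier by (auto simp: cls_sm)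
  next
    fix r x y assume "x \<in> mcarrier Q" "y \<in> mcarrier Q"
    then show "msmult Q r (mplus Q x y) = mplus Q (msmult Q r x) (msmult Q r y)"
      unfolding Q_carrier by (auto simp: cls_plus cls_sm sm_add)
  next
    fix r s x assume "x \<in> mcarrier Q"
    then show "msmult Q (r + s) x = mplus Q (msmult Q r x) (msmult Q s x)"
      unfolding Q_carrier by (auto simp: cls_plus cls_sm add_sm)
  next
    fix r s x assume "x \<in> mcarrier Q"
    then show "msmult Q (r * s) x = msmult Q r (msmult Q s x)"
      unfolding Q_carrier by (auto simp: cls_sm mult_sm)
  qed
qed

lemma cls_hom: "nhom M Q cls"
  unfolding nhom_def Q_carrier by (auto simp: cls_plus cls_sm)

lemma zero_hom: "nhom M Q (\<lambda>_. T)"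
proof -
  have "cls (mzero M) = T" by (rule cls_T[OF T_zero])
  then show ?thesis unfolding nhom_def Q_carrier
    using cls_plus[of "mzero M" "mzero M"] cls_sm[of "mzero M"] by (auto intro: image_eqI[of T cls "mzero M"])
qed

end


definition good :: "('r::ring, 'm, 'z) nmod_scheme \<Rightarrow> 'm \<Rightarrow> bool" where
  "good M m \<longleftrightarrow> m \<in> mcarrier M \<and> (\<forall>e. \<exists>u. msmult M u m = m \<and>
     (\<forall>z\<in>mcarrier M. msmult M e z = z \<longrightarrow> msmult M u z = z))"

context nm begin

lemma good_zero: "good M (mzero M)" unfolding good_def using smz zero_in by blast

lemma good_add: assumes "good M x" "good M y" shows "good M (mplus M x y)"
  unfolding good_def
proof (intro conjI allI)
  show "mplus M x y \<in> mcarrier M" using assms unfolding good_def by simp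
  fix e
  obtain u1 where u1: "msmult M u1 x = x" "\<forall>z\<in>mcarrier M. msmult M e z = z \<longrightarrow> msmult M u1 z = z"
    using assms(1) unfolding good_def by blast
  obtain u2 where u2: "msmult M u2 y = y" "\<forall>z\<in>mcarrier M. msmult M u1 z = z \<longrightarrow> msmult M u2 z = z"
    using assms(2) unfolding good_def by blast
  have x: "x \<in> mcarrier M" and y: "y \<in> mcarrier M" using assms unfolding good_def by auto
  have "msmult M u2 x = x" using u1 u2 x by blast
  then have "msmult M u2 (mplus M x y) = mplus M x y" using u2(1) x y sm_add by metis
  then show "\<exists>u. msmult M u (mplus M x y) = mplus M x y \<and>
     (\<forall>z\<in>mcarrier M. msmult M e z = z \<longrightarrow> msmult M u z = z)" using u1 u2 by blast
qed

lemma good_neg: assumes "good M x" "y \<in> mcarrier M" "mplus M x y = mzero M" shows "good M y"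
  unfolding good_def
proof (intro conjI allI)
  show "y \<in> mcarrier M" by (rule assms(2))
  fix e
  obtain u where u: "msmult M u x = x" "\<forall>z\<in>mcarrier M. msmult M e z = z \<longrightarrow> msmult M u z = z"
    using assms(1) unfolding good_def by blast
  have x: "x \<in> mcarrier M" using assms unfolding good_def by auto
  have "mplus M x (msmult M u y) = mplus M x y"
    using sm_add[OF x assms(2), of u] u(1) assms(3) smz by metis
  then have "msmult M u y = y" using cancel[OF x sm_in[OF assms(2)] assms(2)] by blast
  then show "\<exists>u. msmult M u y = y \<and>
     (\<forall>z\<in>mcarrier M. msmult M e z = z \<longrightarrow> msmult M u z = z)" using u by blast
qed

lemma good_su: "good M x \<Longrightarrow> \<exists>e. msmult M e x = x" unfolding good_def by blast

end

lemma good_image: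
  assumes N: "nmodule N" and M: "nmodule M" and g: "nhom N M g" and su: "s_unital N"
    and x: "x \<in> mcarrier N"
  shows "good M (g x)"
  unfolding good_def
proof (intro conjI allI)
  interpret N: nm N by (rule nm.intro[OF N])
  interpret M: nm M by (rule nm.intro[OF M])
  show "g x \<in> mcarrier M" using g x unfolding nhom_def by blast
  fix e
  let ?y = "mplus N x (msmult N (- e) x)"
  have "?y \<in> mcarrier N" using x by simp
  then obtain e' where e': "msmult N e' ?y = ?y" using su unfolding s_unital_def by blast
  have "msmult N (e + e' + - (e' * e)) x = x" by (rule N.unit_combine[OF x e'])
  then have "msmult M (e + e' + - (e' * e)) (g x) = g x"
    using g x unfolding nhom_def by metis
  moreover have "\<forall>z\<in>mcarrier M. msmult M e z = z \<longrightarrow> msmult M (e + e' + - (e' * e)) z = z"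
    using M.fix_combine by blast
  ultimately show "\<exists>u. msmult M u (g x) = g x \<and>
     (\<forall>z\<in>mcarrier M. msmult M e z = z \<longrightarrow> msmult M u z = z)" by blast
qed

lemma colim_part:
  assumes col: "ncolimit I E src tgt N phi (M :: ('r::ring, 'k) nmod) g"
    and su: "\<forall>i\<in>I. s_unital (N i)"
  shows "s_unital M"
proof -
  have diag: "ndiagram I E src tgt N phi" and coc: "ncocone I E src tgt N phi M g"
    and univ: "\<forall>(X :: ('r, 'k set) nmod) h. ncocone I E src tgt N phi X h \<longrightarrow>
        (\<exists>u. nhom M X u \<and> (\<forall>i\<in>I. \<forall>x\<in>mcarrier (N i). u (g i x) = h i x) \<and>
             (\<forall>v. nhom M X v \<and> (\<forall>i\<in>I. \<forall>x\<in>mcarrier (N i). v (g i x) = h i x)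
                  \<longrightarrow> (\<forall>y\<in>mcarrier M. v y = u y)))"
    using col unfolding ncolimit_def by auto
  have Mm: "nmodule M" and gh: "\<And>i. i \<in> I \<Longrightarrow> nhom (N i) M (g i)"
    and gc: "\<forall>e\<in>E. \<forall>x\<in>mcarrier (N (src e)). g (tgt e) (phi e x) = g (src e) x"
    using coc unfolding ncocone_def by auto
  have Nm: "\<And>i. i \<in> I \<Longrightarrow> nmodule (N i)" using diag unfolding ndiagram_def by auto
  interpret nm M by (rule nm.intro[OF Mm])
  define T where "T = {m. good M m \<and> (\<forall>r. good M (msmult M r m))}"
  have Tg: "\<And>i x. i \<in> I \<Longrightarrow> x \<in> mcarrier (N i) \<Longrightarrow> g i x \<in> T"
  proof -
    fix i x assume i: "i \<in> I" and x: "x \<in> mcarrier (N i)"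
    have "good M (g i x)" using good_image[OF Nm[OF i] Mm gh[OF i]] su i x by blast
    moreover have "\<forall>r. good M (msmult M r (g i x))"
    proof
      fix r
      have rx: "msmult (N i) r x \<in> mcarrier (N i)" using nm.sm_in[OF nm.intro[OF Nm[OF i]] x] .
      have "msmult M r (g i x) = g i (msmult (N i) r x)" using gh[OF i] x unfolding nhom_def by metis
      then show "good M (msmult M r (g i x))"
        using good_image[OF Nm[OF i] Mm gh[OF i]] su i rx by simp
    qed
    ultimately show "g i x \<in> T" unfolding T_def by blast
  qed
  have T_sub: "T \<subseteq> mcarrier M" unfolding T_def good_def by blast
  have q: "nmq M T"
  proof (rule nmq.intro[OF nm.intro[OF Mm]], rule nmq_axioms.intro)
    show "T \<subseteq> mcarrier M" by (rule T_sub)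
    show "mzero M \<in> T" unfolding T_def using good_zero by simp
    fix x y assume x: "x \<in> T" and y: "y \<in> T"
    have xc: "x \<in> mcarrier M" and yc: "y \<in> mcarrier M" using x y T_sub by auto
    have "good M (mplus M x y)" using x y good_add unfolding T_def by blast
    moreover have "\<forall>r. good M (msmult M r (mplus M x y))"
    proof
      fix r
      have "msmult M r (mplus M x y) = mplus M (msmult M r x) (msmult M r y)" using sm_add xc yc by blast
      then show "good M (msmult M r (mplus M x y))" using x y good_add unfolding T_def by simp
    qed
    ultimately show "mplus M x y \<in> T" unfolding T_def by blast
  next
    fix x assume x: "x \<in> T"
    then have xc: "x \<in> mcarrier M" using T_sub by blast
    obtain y where y: "y \<in> mcarrier M" "mplus M x y = mzero M" using inv[OF xc] by blast
    have "good M y" using good_neg x y unfolding T_def by blast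
    moreover have "\<forall>r. good M (msmult M r y)"
    proof
      fix r
      have "mplus M (msmult M r x) (msmult M r y) = mzero M" using y xc sm_add[OF xc y(1), of r] smz by simp
      moreover have "good M (msmult M r x)" using x unfolding T_def by blast
      ultimately show "good M (msmult M r y)" using good_neg sm_in[OF y(1)] by blast
    qed
    ultimately show "\<exists>y\<in>T. mplus M x y = mzero M" using y unfolding T_def by blast
  next
    fix r x assume x: "x \<in> T"
    then have xc: "x \<in> mcarrier M" using T_sub by blast
    have "\<forall>s. good M (msmult M s (msmult M r x))" using x xc mult_sm[OF xc, symmetric] unfolding T_def by simp
    then show "msmult M r x \<in> T" using x unfolding T_def by blast
  qed
  interpret q: nmq M T by (rule q)
  have cocQ: "ncocone I E src tgt N phi q.Q (\<lambda>i x. q.cls (g i x))"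
    unfolding ncocone_def
  proof (intro conjI ballI)
    show "nmodule q.Q" by (rule q.Q_module)
  next
    fix i assume i: "i \<in> I"
    have a: "nhom (N i) M (g i)" by (rule gh[OF i])
    have b: "nhom M q.Q q.cls" by (rule q.cls_hom)
    show "nhom (N i) q.Q (\<lambda>x. q.cls (g i x))"
      unfolding nhom_def
    proof (intro conjI ballI allI)
      fix x assume x: "x \<in> mcarrier (N i)"
      then show "q.cls (g i x) \<in> mcarrier q.Q" using a b unfolding nhom_def by blast
      fix y assume "y \<in> mcarrier (N i)"
      then show "q.cls (g i (mplus (N i) x y)) = mplus q.Q (q.cls (g i x)) (q.cls (g i y))"
        using x a b unfolding nhom_def by simp
    next
      fix r x assume x: "x \<in> mcarrier (N i)"
      then show "q.cls (g i (msmult (N i) r x)) = msmult q.Q r (q.cls (g i x))"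
        using x a b unfolding nhom_def by simp
    qed
  next
    fix e x assume "e \<in> E" "x \<in> mcarrier (N (src e))"
    then show "q.cls (g (tgt e) (phi e x)) = q.cls (g (src e) x)" using gc by simp
  qed
  obtain u where u: "\<forall>v. nhom M q.Q v \<and> (\<forall>i\<in>I. \<forall>x\<in>mcarrier (N i). v (g i x) = q.cls (g i x))
                  \<longrightarrow> (\<forall>y\<in>mcarrier M. v y = u y)"
    using univ[rule_format, OF cocQ] by blast
  have u1: "\<forall>y\<in>mcarrier M. q.cls y = u y" using u[rule_format, of q.cls] q.cls_hom by blast
  have "\<forall>i\<in>I. \<forall>x\<in>mcarrier (N i). T = q.cls (g i x)" using Tg q.cls_T by metis
  then have u2: "\<forall>y\<in>mcarrier M. T = u y" using u[rule_format, of "\<lambda>_. T"] q.zero_hom by blast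
  have "mcarrier M \<subseteq> T" using u1 u2 q.cls_eqT by auto
  then show ?thesis unfolding s_unital_def T_def good_def by blast
qed


lemma ext_part:
  assumes A: "nmodule A" and B: "nmodule B" and C: "nmodule C" and f: "nhom A B f" and g: "nhom B C g"
    and gs: "g ` mcarrier B = mcarrier C"
    and ker: "f ` mcarrier A = {y \<in> mcarrier B. g y = mzero C}"
    and suA: "s_unital A" and suC: "s_unital C"
  shows "s_unital B"
  unfolding s_unital_def
proof
  interpret B: nm B by (rule nm.intro[OF B])
  interpret C: nm C by (rule nm.intro[OF C])
  fix b assume b: "b \<in> mcarrier B"
  have gb: "g b \<in> mcarrier C" using g b unfolding nhom_def by blast
  obtain e where e: "msmult C e (g b) = g b" using suC gb unfolding s_unital_def by blast
  let ?y = "mplus B b (msmult B (- e) b)"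
  have yB: "?y \<in> mcarrier B" using b by simp
  have "g ?y = mplus C (g b) (g (msmult B (- e) b))" using g b unfolding nhom_def by simp
  also have "\<dots> = mplus C (msmult C e (g b)) (msmult C (- e) (g b))" using g b e unfolding nhom_def by simp
  also have "\<dots> = mzero C" using C.sm_neg[OF gb] .
  finally have "?y \<in> f ` mcarrier A" using ker yB by simp
  then obtain a where a: "a \<in> mcarrier A" "?y = f a" by blast
  obtain e' where e': "msmult A e' a = a" using suA a unfolding s_unital_def by blast
  have "msmult B e' (f a) = f (msmult A e' a)" using a f unfolding nhom_def by simp
  then have "msmult B e' ?y = ?y" using a e' by simp
  then show "\<exists>e. msmult B e b = b" using B.unit_combine[OF b] by blast
qed

theorem proposition2p2:
  shows
  \<comment> \<open>closed under submodules\<close>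
  "(\<forall>(M :: ('r::ring, 'm) nmod) S.
      nmodule M \<and> s_unital M \<and> submodule M S \<longrightarrow> s_unital (M\<lparr>mcarrier := S\<rparr>))
   \<and>
  \<comment> \<open>closed under quotient modules (epimorphic images)\<close>
   (\<forall>(M :: ('r, 'm) nmod) (Q :: ('r, 'q) nmod) f.
      nmodule M \<and> nmodule Q \<and> nhom M Q f \<and> f ` mcarrier M = mcarrier Q \<and> s_unital M
      \<longrightarrow> s_unital Q)
   \<and>
  \<comment> \<open>closed under extensions: 0 -> A -> B -> C -> 0 exact\<close>
   (\<forall>(A :: ('r, 'a) nmod) (B :: ('r, 'b) nmod) (C :: ('r, 'c) nmod) f g.
      nmodule A \<and> nmodule B \<and> nmodule C \<and> nhom A B f \<and> nhom B C g \<and>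
      inj_on f (mcarrier A) \<and> g ` mcarrier B = mcarrier C \<and>
      f ` mcarrier A = {y \<in> mcarrier B. g y = mzero C} \<and>
      s_unital A \<and> s_unital C \<longrightarrow> s_unital B)
   \<and>
  \<comment> \<open>closed under all (small) colimits\<close>
   (\<forall>(I :: 'i set) (E :: 'e set) src tgt (N :: 'i \<Rightarrow> ('r, 'n) nmod) phi
      (M :: ('r, 'k) nmod) g.
      ncolimit I E src tgt N phi M g \<and> (\<forall>i\<in>I. s_unital (N i)) \<longrightarrow> s_unital M)"

proof (intro conjI allI impI)
  fix M :: "('r::ring, 'm) nmod" and S
  assume h: "nmodule M \<and> s_unital M \<and> submodule M S"
  then show "s_unital (M\<lparr>mcarrier := S\<rparr>)" unfolding s_unital_def submodule_def by auto
next
  fix M :: "('r::ring, 'm) nmod" and Q :: "('r, 'q) nmod" and f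
  assume h: "nmodule M \<and> nmodule Q \<and> nhom M Q f \<and> f ` mcarrier M = mcarrier Q \<and> s_unital M"
  show "s_unital Q" unfolding s_unital_def
  proof
    fix q assume "q \<in> mcarrier Q"
    then obtain m where m: "m \<in> mcarrier M" "q = f m" using h by blast
    obtain e where "msmult M e m = m" using h m unfolding s_unital_def by blast
    moreover have "f (msmult M e m) = msmult Q e (f m)" using h m unfolding nhom_def by blast
    ultimately have "msmult Q e q = q" using m by simp
    then show "\<exists>e. msmult Q e q = q" by blast
  qed
next
  fix A :: "('r::ring, 'a) nmod" and B :: "('r, 'b) nmod" and C :: "('r, 'c) nmod" and f g
  assume "nmodule A \<and> nmodule B \<and> nmodule C \<and> nhom A B f \<and> nhom B C g \<and>
      inj_on f (mcarrier A) \<and> g ` mcarrier B = mcarrier C \<and>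
      f ` mcarrier A = {y \<in> mcarrier B. g y = mzero C} \<and>
      s_unital A \<and> s_unital C"
  then show "s_unital B" using ext_part[of A B C f g] by simp
next
  fix I :: "'i set" and E :: "'e set" and src tgt and N :: "'i \<Rightarrow> ('r::ring, 'n) nmod" and phi
    and M :: "('r, 'k) nmod" and g
  assume "ncolimit I E src tgt N phi M g \<and> (\<forall>i\<in>I. s_unital (N i))"
  then show "s_unital M" using colim_part[of I E src tgt N phi M g] by simp
qed

end
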